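(* Let $0<a<D$. There exists $M>0$ such that for every bounded set $B\subset\mathbb{R}_+^3$ there exists $t_B>0$ with the following property: for every $\omega\in\Omega$ and every nonnegative global solution $(s(t),m_1(t),m_2(t))$, $t\ge0$, of the random chemostat system $$s'(t)=(D+\psi(\xi^*(\theta_t\omega)))(s_{\mathrm{in}}-\alpha s(t))-c\mu(s(t))(m_1(t)+m_2(t))+rd\,m_1(t),$$ $$m_1'(t)=m_1(t)\big(-d-\alpha(D+\psi(\xi^*(\theta_t\omega)))+g\mu(s(t))-r_1m_1(t)-r_2m_2(t)-\alpha_1\big)+\alpha_2m_2(t),$$ $$m_2'(t)=m_2(t)\big(-d+g\mu(s(t))-r_1m_1(t)-r_2m_2(t)-\alpha_2\big)+\alpha_1m_1(t)$$ with initial condition $(s(0),m_1(0),m_2(0))\in B$, one has $$g\,s(t)+c\,(m_1(t)+m_2(t))\le M\quad\text{for all } t\ge t_B.$$ In particular, the system has an absorbing set independent of $\omega$.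
   Context: $\mathbb{R}_+^3=\{(x,y,z)\in\mathbb{R}^3: x,y,z\ge0\}$. Let $\Omega$ be the set of continuous functions $\omega:\mathbb{R}\to\mathbb{R}$ with $\omega(0)=0$, with Borel $\sigma$-algebra and Wiener measure, and $\theta_t\omega(\cdot)=\omega(\cdot+t)-\omega(t)$ the Wiener shift. The Ornstein–Uhlenbeck process is $\xi^*(\theta_t\omega)=-\int_{-\infty}^0 e^{s}\,\theta_t\omega(s)\,ds$. For a constant $a>0$, $\psi(\xi)=\frac{2a}{\pi}\arctan(\xi)$. Parameters: $D>0$, $s_{\mathrm{in}}>0$, $\alpha>0$, $c>0$, $g\in(0,c]$, $r\in(0,1)$, $d>0$, $\alpha_1,\alpha_2\ge0$, $r_1,r_2\ge0$. The consumption function $\mu:[0,+\infty)\to[0,+\infty)$ is continuous, $\mu(0)=0$, $\mu(x)>0$ for $x>0$, and $\mu(x)\le1$ for all $x\ge0$. *)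

theory Defs
  imports "HOL-Analysis.Analysis"
begin

definition Wiener_Omega :: "(real \<Rightarrow> real) set" where
  "Wiener_Omega = {\<omega>. continuous_on UNIV \<omega> \<and> \<omega> 0 = 0}"

definition wiener_shift :: "real \<Rightarrow> (real \<Rightarrow> real) \<Rightarrow> (real \<Rightarrow> real)" where
  "wiener_shift t \<omega> = (\<lambda>s. \<omega> (s + t) - \<omega> t)"

definition OU :: "(real \<Rightarrow> real) \<Rightarrow> real" where
  "OU \<omega> = - integral {..0} (\<lambda>s. exp s * \<omega> s)"

definition psi :: "real \<Rightarrow> real \<Rightarrow> real" where
  "psi a \<xi> = 2 * a / pi * arctan \<xi>"

definition chemostat_solution ::
  "real \<Rightarrow> real \<Rightarrow> real \<Rightarrow> real \<Rightarrow> real \<Rightarrow> real \<Rightarrow> real \<Rightarrow> real \<Rightarrow> real \<Rightarrow> real \<Rightarrow> real \<Rightarrow> real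
   \<Rightarrow> (real \<Rightarrow> real) \<Rightarrow> (real \<Rightarrow> real) \<Rightarrow> (real \<Rightarrow> real) \<Rightarrow> (real \<Rightarrow> real) \<Rightarrow> (real \<Rightarrow> real) \<Rightarrow> bool" where
  "chemostat_solution D s_in \<alpha> c g r d \<alpha>\<^sub>1 \<alpha>\<^sub>2 r\<^sub>1 r\<^sub>2 a \<mu> \<omega> s m\<^sub>1 m\<^sub>2 \<longleftrightarrow>
     (\<forall>t\<ge>0. s t \<ge> 0 \<and> m\<^sub>1 t \<ge> 0 \<and> m\<^sub>2 t \<ge> 0) \<and>
     (\<forall>t\<ge>0.
        (let Dt = D + psi a (OU (wiener_shift t \<omega>)) in
         (s has_real_derivative
            (Dt * (s_in - \<alpha> * s t) - c * \<mu> (s t) * (m\<^sub>1 t + m\<^sub>2 t) + r * d * m\<^sub>1 t)) (at t within {0..}) \<and>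
         (m\<^sub>1 has_real_derivative
            (m\<^sub>1 t * (- d - \<alpha> * Dt + g * \<mu> (s t) - r\<^sub>1 * m\<^sub>1 t - r\<^sub>2 * m\<^sub>2 t - \<alpha>\<^sub>1) + \<alpha>\<^sub>2 * m\<^sub>2 t))
            (at t within {0..}) \<and>
         (m\<^sub>2 has_real_derivative
            (m\<^sub>2 t * (- d + g * \<mu> (s t) - r\<^sub>1 * m\<^sub>1 t - r\<^sub>2 * m\<^sub>2 t - \<alpha>\<^sub>2) + \<alpha>\<^sub>1 * m\<^sub>1 t))
            (at t within {0..})))"

end

theory Submission
  imports Defs
begin

lemma decr_within:
  fixes f f' :: "real \<Rightarrow> real"
  assumes d: "\<And>t. t \<ge> 0 \<Longrightarrow> (f has_real_derivative f' t) (at t within {0..})"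
    and n: "\<And>t. t \<ge> 0 \<Longrightarrow> f' t \<le> 0" and t: "t \<ge> 0"
  shows "f t \<le> f 0"
proof (rule DERIV_nonpos_imp_decreasing_open[OF t])
  fix x :: real assume x: "0 < x" "x < t"
  have "interior {0::real..} = {0<..}" by simp
  hence "at x within {0..} = at x" using x by (intro at_within_interior) auto
  thus "\<exists>y. DERIV f x :> y \<and> y \<le> 0" using d[of x] n[of x] x by auto
next
  have "\<forall>x\<in>{0..t}. continuous (at x within {0..t}) f"
  proof
    fix x assume "x \<in> {0..t}"
    hence "continuous (at x within {0..}) f" using d[of x] DERIV_continuous by auto
    thus "continuous (at x within {0..t}) f"
      by (rule continuous_within_subset) auto
  qed
  thus "continuous_on {0..t} f" using continuous_on_eq_continuous_within by blast
qed

theorem theorem3p2: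
  fixes D s_in \<alpha> c g r d \<alpha>\<^sub>1 \<alpha>\<^sub>2 r\<^sub>1 r\<^sub>2 a :: real
    and \<mu> :: "real \<Rightarrow> real"
  assumes "D > 0" "s_in > 0" "\<alpha> > 0" "c > 0" "0 < g" "g \<le> c" "0 < r" "r < 1" "d > 0"
    "\<alpha>\<^sub>1 \<ge> 0" "\<alpha>\<^sub>2 \<ge> 0" "r\<^sub>1 \<ge> 0" "r\<^sub>2 \<ge> 0"
    and "0 < a" "a < D"
    and "continuous_on {0..} \<mu>" "\<mu> 0 = 0" "\<And>x. x > 0 \<Longrightarrow> \<mu> x > 0"
    "\<And>x. x \<ge> 0 \<Longrightarrow> \<mu> x \<ge> 0" "\<And>x. x \<ge> 0 \<Longrightarrow> \<mu> x \<le> 1"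
  shows "\<exists>M>0. \<forall>B :: (real \<times> real \<times> real) set.
           bounded B \<and> B \<subseteq> {(x, y, z). x \<ge> 0 \<and> y \<ge> 0 \<and> z \<ge> 0} \<longrightarrow>
           (\<exists>tB>0. \<forall>\<omega>\<in>Wiener_Omega. \<forall>s m\<^sub>1 m\<^sub>2.
              chemostat_solution D s_in \<alpha> c g r d \<alpha>\<^sub>1 \<alpha>\<^sub>2 r\<^sub>1 r\<^sub>2 a \<mu> \<omega> s m\<^sub>1 m\<^sub>2 \<and>
              (s 0, m\<^sub>1 0, m\<^sub>2 0) \<in> B \<longrightarrow>
              (\<forall>t\<ge>tB. g * s t + c * (m\<^sub>1 t + m\<^sub>2 t) \<le> M))"
proof -
  define lam where "lam = min (\<alpha> * (D - a)) (d * (1 - r))"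
  define K where "K = g * (D + a) * s_in"
  have lam: "lam > 0" using assms unfolding lam_def by auto
  have K: "K > 0" using assms unfolding K_def by auto
  have psib: "\<bar>psi a x\<bar> < a" for x
  proof -
    have "\<bar>arctan x\<bar> < pi/2" using arctan_bounded[of x] by auto
    hence "2 * a / pi * \<bar>arctan x\<bar> < 2 * a / pi * (pi/2)"
      using assms pi_gt_zero by (intro mult_strict_left_mono) auto
    thus ?thesis unfolding psi_def using assms pi_gt_zero by (simp add: abs_mult)
  qed
  have main: "g * s t + c * (m\<^sub>1 t + m\<^sub>2 t) \<le> K / lam + exp (- lam * t) * max 0 (g * s 0 + c * (m\<^sub>1 0 + m\<^sub>2 0))"
    if sol: "chemostat_solution D s_in \<alpha> c g r d \<alpha>\<^sub>1 \<alpha>\<^sub>2 r\<^sub>1 r\<^sub>2 a \<mu> \<omega> s m\<^sub>1 m\<^sub>2" and t: "t \<ge> 0"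
    for \<omega> s m\<^sub>1 m\<^sub>2 t
  proof -
    define V where "V = (\<lambda>t. g * s t + c * (m\<^sub>1 t + m\<^sub>2 t))"
    define Dt where "Dt = (\<lambda>t. D + psi a (OU (wiener_shift t \<omega>)))"
    define V' where "V' = (\<lambda>t. g * (Dt t * (s_in - \<alpha> * s t) - c * \<mu> (s t) * (m\<^sub>1 t + m\<^sub>2 t) + r * d * m\<^sub>1 t)
       + c * ((m\<^sub>1 t * (- d - \<alpha> * Dt t + g * \<mu> (s t) - r\<^sub>1 * m\<^sub>1 t - r\<^sub>2 * m\<^sub>2 t - \<alpha>\<^sub>1) + \<alpha>\<^sub>2 * m\<^sub>2 t)
       + (m\<^sub>2 t * (- d + g * \<mu> (s t) - r\<^sub>1 * m\<^sub>1 t - r\<^sub>2 * m\<^sub>2 t - \<alpha>\<^sub>2) + \<alpha>\<^sub>1 * m\<^sub>1 t)))"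
    have nn: "s x \<ge> 0" "m\<^sub>1 x \<ge> 0" "m\<^sub>2 x \<ge> 0" if "x \<ge> 0" for x
      using sol that unfolding chemostat_solution_def by auto
    have dV: "(V has_real_derivative V' x) (at x within {0..})" if "x \<ge> 0" for x
    proof -
      have "(s has_real_derivative
            (Dt x * (s_in - \<alpha> * s x) - c * \<mu> (s x) * (m\<^sub>1 x + m\<^sub>2 x) + r * d * m\<^sub>1 x)) (at x within {0..}) \<and>
         (m\<^sub>1 has_real_derivative
            (m\<^sub>1 x * (- d - \<alpha> * Dt x + g * \<mu> (s x) - r\<^sub>1 * m\<^sub>1 x - r\<^sub>2 * m\<^sub>2 x - \<alpha>\<^sub>1) + \<alpha>\<^sub>2 * m\<^sub>2 x))
            (at x within {0..}) \<and>
         (m\<^sub>2 has_real_derivative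
            (m\<^sub>2 x * (- d + g * \<mu> (s x) - r\<^sub>1 * m\<^sub>1 x - r\<^sub>2 * m\<^sub>2 x - \<alpha>\<^sub>2) + \<alpha>\<^sub>1 * m\<^sub>1 x))
            (at x within {0..})"
        using sol that unfolding chemostat_solution_def Dt_def Let_def by auto
      thus ?thesis unfolding V_def V'_def
        by (auto intro!: derivative_eq_intros)
    qed
    have V'le: "V' x \<le> K - lam * V x" if x: "x \<ge> 0" for x
    proof -
      have Dlo: "Dt x \<ge> D - a" and Dhi: "Dt x \<le> D + a"
        using psib[of "OU (wiener_shift x \<omega>)"] unfolding Dt_def by auto
      have eq: "V' x = g * Dt x * s_in - g * \<alpha> * Dt x * s x + g * r * d * m\<^sub>1 x - c * d * (m\<^sub>1 x + m\<^sub>2 x)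
          - c * \<alpha> * Dt x * m\<^sub>1 x - c * (r\<^sub>1 * m\<^sub>1 x + r\<^sub>2 * m\<^sub>2 x) * (m\<^sub>1 x + m\<^sub>2 x)"
        unfolding V'_def by (simp add: algebra_simps)
      have s0: "s x \<ge> 0" and m1: "m\<^sub>1 x \<ge> 0" and m2: "m\<^sub>2 x \<ge> 0" using nn x by auto
      have a1: "g * Dt x * s_in \<le> K" unfolding K_def using Dhi assms by (intro mult_right_mono mult_left_mono) auto
      have a2: "g * \<alpha> * Dt x * s x \<ge> lam * (g * s x)"
      proof -
        have "lam * (g * s x) \<le> (\<alpha> * (D - a)) * (g * s x)" unfolding lam_def
          using s0 assms by (intro mult_right_mono) auto
        also have "\<dots> \<le> (\<alpha> * Dt x) * (g * s x)" using Dlo s0 assms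
          by (intro mult_right_mono mult_left_mono) auto
        finally show ?thesis by (simp add: algebra_simps)
      qed
      have a3: "g * r * d * m\<^sub>1 x \<le> c * r * d * m\<^sub>1 x" using assms m1
        by (intro mult_right_mono) auto
      have a4: "c * d * (m\<^sub>1 x + m\<^sub>2 x) - c * r * d * m\<^sub>1 x \<ge> lam * (c * (m\<^sub>1 x + m\<^sub>2 x))"
      proof -
        have "lam * (c * (m\<^sub>1 x + m\<^sub>2 x)) \<le> (d * (1 - r)) * (c * (m\<^sub>1 x + m\<^sub>2 x))" unfolding lam_def
          using m1 m2 assms by (intro mult_right_mono) auto
        also have "\<dots> \<le> c * d * (m\<^sub>1 x + m\<^sub>2 x) - c * r * d * m\<^sub>1 x"
          using m1 m2 assms by (simp add: algebra_simps)
        finally show ?thesis .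
      qed
      have a5: "c * \<alpha> * Dt x * m\<^sub>1 x \<ge> 0" using assms Dlo m1 by auto
      have a6: "c * (r\<^sub>1 * m\<^sub>1 x + r\<^sub>2 * m\<^sub>2 x) * (m\<^sub>1 x + m\<^sub>2 x) \<ge> 0" using assms m1 m2 by auto
      show ?thesis unfolding eq V_def using a1 a2 a3 a4 a5 a6 by (simp add: algebra_simps)
    qed
    define W where "W = (\<lambda>t. exp (lam * t) * (V t - K / lam))"
    have dW: "(W has_real_derivative (lam * exp (lam * x) * (V x - K / lam) + exp (lam * x) * V' x)) (at x within {0..})"
      if "x \<ge> 0" for x
      unfolding W_def using dV[OF that] by (auto intro!: derivative_eq_intros)
    have nW: "lam * exp (lam * x) * (V x - K / lam) + exp (lam * x) * V' x \<le> 0" if "x \<ge> 0" for x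
    proof -
      have "lam * exp (lam * x) * (V x - K / lam) + exp (lam * x) * V' x
          = exp (lam * x) * (V' x + lam * V x - K)" using lam by (simp add: field_simps)
      also have "\<dots> \<le> 0" using V'le[OF that] by (intro mult_nonneg_nonpos) auto
      finally show ?thesis .
    qed
    have "W t \<le> W 0" by (rule decr_within[OF dW nW t])
    hence "exp (lam * t) * (V t - K / lam) \<le> V 0 - K / lam" unfolding W_def by simp
    hence "V t - K / lam \<le> exp (- lam * t) * (V 0 - K / lam)"
      by (simp add: exp_minus field_simps)
    also have "\<dots> \<le> exp (- lam * t) * max 0 (V 0)"
    proof (intro mult_left_mono)
      have "K / lam > 0" using lam K by simp
      thus "V 0 - K / lam \<le> max 0 (V 0)" by linarith
    qed simp
    finally show ?thesis unfolding V_def by simp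
  qed
  show ?thesis
  proof (rule exI[of _ "K / lam + 1"], intro conjI allI impI)
    show "K / lam + 1 > 0" using K lam by (simp add: add_pos_pos)
    fix B :: "(real \<times> real \<times> real) set"
    assume "bounded B \<and> B \<subseteq> {(x, y, z). x \<ge> 0 \<and> y \<ge> 0 \<and> z \<ge> 0}"
    then obtain R where R: "\<And>p. p \<in> B \<Longrightarrow> norm p \<le> R" by (auto simp: bounded_iff)
    define R' where "R' = max 1 ((g + 2 * c) * R)"
    have R'1: "R' \<ge> 1" unfolding R'_def by auto
    define tB where "tB = ln R' / lam + 1"
    have tB: "tB > 0" unfolding tB_def using R'1 lam
      by (intro add_nonneg_pos divide_nonneg_pos) auto
    have X: "g * s t + c * (m\<^sub>1 t + m\<^sub>2 t) \<le> K / lam + 1"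
      if H: "chemostat_solution D s_in \<alpha> c g r d \<alpha>\<^sub>1 \<alpha>\<^sub>2 r\<^sub>1 r\<^sub>2 a \<mu> \<omega> s m\<^sub>1 m\<^sub>2 \<and> (s 0, m\<^sub>1 0, m\<^sub>2 0) \<in> B"
        and t: "tB \<le> t" for \<omega> s m\<^sub>1 m\<^sub>2 t
    proof -
      have t0: "t \<ge> 0" using t tB by auto
      let ?p = "(s 0, m\<^sub>1 0, m\<^sub>2 0)"
      have nP: "norm ?p \<le> R" using R H by blast
      have b1: "\<bar>s 0\<bar> \<le> R" using nP norm_fst_le[of "s 0" "(m\<^sub>1 0, m\<^sub>2 0)"] by auto
      have "norm (m\<^sub>1 0, m\<^sub>2 0) \<le> R" using nP norm_snd_le[of "(m\<^sub>1 0, m\<^sub>2 0)" "s 0"] by auto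
      hence b2: "\<bar>m\<^sub>1 0\<bar> \<le> R" "\<bar>m\<^sub>2 0\<bar> \<le> R"
        using norm_fst_le[of "m\<^sub>1 0" "m\<^sub>2 0"] norm_snd_le[of "m\<^sub>2 0" "m\<^sub>1 0"] by auto
      have "g * s 0 + c * (m\<^sub>1 0 + m\<^sub>2 0) \<le> g * R + c * (R + R)"
        using b1 b2 assms by (intro add_mono mult_left_mono) auto
      hence V0: "max 0 (g * s 0 + c * (m\<^sub>1 0 + m\<^sub>2 0)) \<le> R'" unfolding R'_def by (auto simp: algebra_simps)
      have "exp (- lam * t) * R' \<le> exp (- ln R') * R'"
      proof (intro mult_right_mono)
        have "ln R' \<le> lam * tB" unfolding tB_def using lam R'1 by (simp add: field_simps)
        also have "\<dots> \<le> lam * t" using t lam by auto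
        finally show "exp (- lam * t) \<le> exp (- ln R')" by simp
      qed (use R'1 in auto)
      also have "\<dots> = 1" using R'1 by (simp add: exp_minus)
      finally have e: "exp (- lam * t) * R' \<le> 1" .
      have "exp (- lam * t) * max 0 (g * s 0 + c * (m\<^sub>1 0 + m\<^sub>2 0)) \<le> exp (- lam * t) * R'"
        using V0 by (intro mult_left_mono) auto
      thus ?thesis
        using main[OF conjunct1[OF H] t0] e by linarith
    qed
    show "\<exists>tB>0. \<forall>\<omega>\<in>Wiener_Omega. \<forall>s m\<^sub>1 m\<^sub>2.
              chemostat_solution D s_in \<alpha> c g r d \<alpha>\<^sub>1 \<alpha>\<^sub>2 r\<^sub>1 r\<^sub>2 a \<mu> \<omega> s m\<^sub>1 m\<^sub>2 \<and>
              (s 0, m\<^sub>1 0, m\<^sub>2 0) \<in> B \<longrightarrow>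
              (\<forall>t\<ge>tB. g * s t + c * (m\<^sub>1 t + m\<^sub>2 t) \<le> K / lam + 1)"
      using X tB by blast
  qed
qed

end
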